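(* Suppose Assumptions 1, 2 and 3 hold and problem (P) is feasible (equivalently $\sum_i(\underline{x}_i-\phi_i(\underline{x}_i))\le\sum_i d_i\le\sum_i(\bar{x}_i-\phi_i(\bar{x}_i))$). Consider the distributed dynamics, for $i=1,\dots,N$, $$\dot{\lambda}_i=d_i-\hat{x}_i(\lambda_i)+\phi_i\big(\hat{x}_i(\lambda_i)\big)+k\sum_{j\in\mathcal{N}_i}(\lambda_j-\lambda_i),\qquad x_i(t)=\hat{x}_i(\lambda_i(t)),$$ with coupling gain $k>0$. Then for every $k>0$ and every initial condition $(\lambda_1(0),\dots,\lambda_N(0))\in\mathbb{R}^N$, the solution $(\lambda_1(t),\dots,\lambda_N(t))$ converges to a point as $t\to\infty$, and $$\lim_{t\to\infty}\sum_{i=1}^N\Big(x_i(t)-\phi_i\big(x_i(t)\big)\Big)=\sum_{i=1}^N d_i.$$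
   Context: For $i=1,\dots,N$: $d_i\in\mathbb{R}$, $\mathcal{X}_i=[\underline{x}_i,\bar{x}_i]$ a nonempty closed interval, $f_i,\phi_i:\mathbb{R}\to\mathbb{R}$. Problem (P): minimize $\sum_{i=1}^N f_i(x_i)$ subject to $\sum_{i=1}^N d_i=\sum_{i=1}^N(x_i-\phi_i(x_i))$ and $x_i\in\mathcal{X}_i$ for all $i$. Assumption 1: for each $i$, $f_i$ and $\phi_i$ are continuously differentiable, $f_i$ is strictly convex on $\mathcal{X}_i$, $\phi_i$ is convex on $\mathcal{X}_i$, and $\phi_i'(x_i)<1$ for all $x_i\in\mathcal{X}_i$. Assumption 2: $f_i'(x_i)>0$ for all $x_i\in\mathcal{X}_i$ and all $i$. Assumption 3: the communication graph $\mathcal{G}=(\{1,\dots,N\},\mathcal{E})$ is undirected and connected; $\mathcal{N}_i=\{j:(j,i)\in\mathcal{E}\}$. Let $v_i(x_i)=f_i'(x_i)(1-\phi_i'(x_i))^{-1}$ on $\mathcal{X}_i$ (strictly increasing). Define for $\lambda\in\mathbb{R}$: $\hat{x}_i(\lambda)=\underline{x}_i$ if $\lambda\le v_i(\underline{x}_i)$; $\hat{x}_i(\lambda)=v_i^{-1}(\lambda)$ if $v_i(\underline{x}_i)<\lambda<v_i(\bar{x}_i)$; $\hat{x}_i(\lambda)=\bar{x}_i$ if $\lambda\ge v_i(\bar{x}_i)$. *)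

theory Defs
  imports "HOL-Analysis.Analysis"
begin

definition strictly_convex_on :: "real set \<Rightarrow> (real \<Rightarrow> real) \<Rightarrow> bool" where
  "strictly_convex_on S g \<longleftrightarrow>
     (\<forall>x\<in>S. \<forall>y\<in>S. \<forall>u::real. x \<noteq> y \<and> 0 < u \<and> u < 1 \<longrightarrow>
        g (u * x + (1 - u) * y) < u * g x + (1 - u) * g y)"

definition vfun :: "(real \<Rightarrow> real) \<Rightarrow> (real \<Rightarrow> real) \<Rightarrow> real \<Rightarrow> real" where
  "vfun f \<phi> x = deriv f x / (1 - deriv \<phi> x)"

definition xhat :: "(real \<Rightarrow> real) \<Rightarrow> (real \<Rightarrow> real) \<Rightarrow> real \<Rightarrow> real \<Rightarrow> real \<Rightarrow> real" where
  "xhat f \<phi> lo hi l =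
     (if l \<le> vfun f \<phi> lo then lo
      else if l \<ge> vfun f \<phi> hi then hi
      else the_inv_into {lo..hi} (vfun f \<phi>) l)"

end

theory Submission
  imports Defs
begin

lemma deriv_mono_convex:
  fixes f F :: "real \<Rightarrow> real"
  assumes cvx: "convex_on {a..b} f" and der: "\<And>x. (f has_real_derivative F x) (at x)"
    and cont: "continuous_on UNIV F"
    and xy: "a \<le> x" "x \<le> y" "y \<le> b"
  shows "F x \<le> F y"
proof -
  have int: "F u \<le> F w" if "a < u" "u < w" "w < b" for u w
  proof -
    have i1: "u \<in> interior {a..b}" "w \<in> interior {a..b}" using that by auto
    have "f w - f u \<ge> F u * (w - u)"
      by (rule convex_on_imp_above_tangent[OF cvx _ i1(1)]) (use that in \<open>auto intro: has_field_derivative_at_within der\<close>)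
    moreover have "f u - f w \<ge> F w * (u - w)"
      by (rule convex_on_imp_above_tangent[OF cvx _ i1(2)]) (use that in \<open>auto intro: has_field_derivative_at_within der\<close>)
    ultimately have "F u * (w - u) \<le> F w * (w - u)" by (simp add: algebra_simps)
    then show ?thesis using that by simp
  qed
  show ?thesis
  proof (cases "x = y")
    case True then show ?thesis by simp
  next
    case False
    then have xy': "x < y" using xy by simp
    define e where "e = (\<lambda>n::nat. (y - x) / (3 + real n))"
    have e0: "e \<longlonglongrightarrow> 0" unfolding e_def
      by (intro tendsto_divide_0[OF tendsto_const] filterlim_at_top_imp_at_infinity filterlim_tendsto_add_at_top[OF tendsto_const filterlim_real_sequentially])
    have epos: "e n > 0" for n using xy' by (simp add: e_def)
    have esmall: "2 * e n < y - x" for n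
    proof -
      have "2 * e n = (y - x) * (2 / (3 + real n))" by (simp add: e_def)
      also have "\<dots> < (y - x) * 1" using xy' by (intro mult_strict_left_mono) auto
      finally show ?thesis by simp
    qed
    have l1: "(\<lambda>n. F (x + e n)) \<longlonglongrightarrow> F x"
      using isCont_tendsto_compose[of x F "\<lambda>n. x + e n"] cont tendsto_add[OF tendsto_const e0, of x]
      by (simp add: continuous_on_eq_continuous_at)
    have l2: "(\<lambda>n. F (y - e n)) \<longlonglongrightarrow> F y"
      using isCont_tendsto_compose[of y F "\<lambda>n. y - e n"] cont tendsto_diff[OF tendsto_const e0, of y]
      by (simp add: continuous_on_eq_continuous_at)
    show ?thesis
    proof (rule tendsto_le[OF _ l2 l1])
      show "\<forall>\<^sub>F n in sequentially. F (x + e n) \<le> F (y - e n)"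
        using int epos esmall xy by (intro always_eventually allI) (smt (verit))
    qed simp
  qed
qed

lemma strict_convex_imp_convex:
  fixes f :: "real \<Rightarrow> real"
  assumes "strictly_convex_on {a..b} f"
  shows "convex_on {a..b} f"
proof (rule convex_onI)
  fix t x y :: real assume t: "0 < t" "t < 1" and xy: "x \<in> {a..b}" "y \<in> {a..b}"
  show "f ((1 - t) *\<^sub>R x + t *\<^sub>R y) \<le> (1 - t) * f x + t * f y"
  proof (cases "x = y")
    case True then show ?thesis by (simp add: algebra_simps)
  next
    case False
    then have "f ((1 - t) * x + (1 - (1 - t)) * y) < (1 - t) * f x + (1 - (1 - t)) * f y"
      using assms[unfolded strictly_convex_on_def, rule_format, of x y "1 - t"] xy t False by simp
    then show ?thesis by simp
  qed
qed (simp add: convex_real_interval)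

lemma deriv_strict_mono_convex:
  fixes f F :: "real \<Rightarrow> real"
  assumes sc: "strictly_convex_on {a..b} f" and der: "\<And>x. (f has_real_derivative F x) (at x)"
    and cont: "continuous_on UNIV F"
    and xy: "a \<le> x" "x < y" "y \<le> b"
  shows "F x < F y"
proof (rule ccontr)
  assume "\<not> F x < F y"
  moreover have cvx: "convex_on {a..b} f" by (rule strict_convex_imp_convex[OF sc])
  ultimately have eq: "F y = F x" using deriv_mono_convex[OF cvx der cont, of x y] xy by simp
  have Fz: "F z = F x" if "x \<le> z" "z \<le> y" for z
    using deriv_mono_convex[OF cvx der cont, of x z] deriv_mono_convex[OF cvx der cont, of z y] that xy eq
    by linarith
  define h where "h = (\<lambda>z. f z - F x * z)"
  have hd: "(h has_real_derivative F z - F x) (at z)" for z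
    unfolding h_def by (auto intro!: derivative_eq_intros der)
  have hconst: "h z = h x" if "x \<le> z" "z \<le> y" for z
  proof -
    have "h x \<le> h z"
    proof (rule DERIV_nonneg_imp_nondecreasing[OF that(1)])
      fix w assume "x \<le> w" "w \<le> z"
      then show "\<exists>D. (h has_real_derivative D) (at w) \<and> 0 \<le> D"
        using hd[of w] Fz[of w] that by (intro exI[of _ "F w - F x"]) simp
    qed
    moreover have "h x \<ge> h z"
    proof (rule DERIV_nonpos_imp_nonincreasing[OF that(1)])
      fix w assume "x \<le> w" "w \<le> z"
      then show "\<exists>D. (h has_real_derivative D) (at w) \<and> D \<le> 0"
        using hd[of w] Fz[of w] that by (intro exI[of _ "F w - F x"]) simp
    qed
    ultimately show ?thesis by simp
  qed
  define m where "m = (1/2) * x + (1 - 1/2) * y"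
  have xI: "x \<in> {a..b}" "y \<in> {a..b}" using xy by auto
  have "f m < (1/2) * f x + (1 - 1/2) * f y"
    using sc[unfolded strictly_convex_on_def, rule_format, OF xI, of "1/2"] xy unfolding m_def by simp
  moreover have "x \<le> m" "m \<le> y" using xy by (auto simp: m_def)
  then have "h m = h x" by (rule hconst)
  moreover have "h y = h x" using xy by (intro hconst) auto
  ultimately show False unfolding h_def m_def by (simp add: field_simps)
qed

lemma C1_real_deriv:
  fixes f :: "real \<Rightarrow> real"
  assumes "f C1_differentiable_on UNIV"
  obtains F where "\<And>x. (f has_real_derivative F x) (at x)" "continuous_on UNIV F" "\<And>x. deriv f x = F x"
proof -
  from assms obtain D where D: "\<And>x. (f has_vector_derivative D x) (at x)" "continuous_on UNIV D"
    unfolding C1_differentiable_on_def by auto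
  then have "\<And>x. (f has_real_derivative D x) (at x)"
    using has_real_derivative_iff_has_vector_derivative by blast
  with D(2) show ?thesis using that DERIV_imp_deriv by blast
qed

lemma gprops:
  fixes f \<phi> :: "real \<Rightarrow> real" and lo hi :: real
  assumes lohi: "lo \<le> hi" and fC1: "f C1_differentiable_on UNIV" and pC1: "\<phi> C1_differentiable_on UNIV"
    and sc: "strictly_convex_on {lo..hi} f" and pc: "convex_on {lo..hi} \<phi>"
    and pd: "\<And>x. x \<in> {lo..hi} \<Longrightarrow> deriv \<phi> x < 1" and fd: "\<And>x. x \<in> {lo..hi} \<Longrightarrow> deriv f x > 0"
  shows "continuous_on UNIV (\<lambda>l. xhat f \<phi> lo hi l - \<phi> (xhat f \<phi> lo hi l))"
    "mono (\<lambda>l. xhat f \<phi> lo hi l - \<phi> (xhat f \<phi> lo hi l))"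
    "\<And>l. l \<le> vfun f \<phi> lo \<Longrightarrow> xhat f \<phi> lo hi l - \<phi> (xhat f \<phi> lo hi l) = lo - \<phi> lo"
    "\<And>l. l \<ge> vfun f \<phi> hi \<Longrightarrow> xhat f \<phi> lo hi l - \<phi> (xhat f \<phi> lo hi l) = hi - \<phi> hi"
proof -
  obtain F where Fd: "\<And>x. (f has_real_derivative F x) (at x)" and Fc: "continuous_on UNIV F"
    and Fe: "\<And>x. deriv f x = F x" using C1_real_deriv[OF fC1] by blast
  obtain P where Pd: "\<And>x. (\<phi> has_real_derivative P x) (at x)" and Pc: "continuous_on UNIV P"
    and Pe: "\<And>x. deriv \<phi> x = P x" using C1_real_deriv[OF pC1] by blast
  define v where "v = (\<lambda>x. F x / (1 - P x))"
  have vfun_eq: "vfun f \<phi> = v" unfolding vfun_def v_def by (simp add: Fe Pe)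
  have P1: "P x < 1" if "x \<in> {lo..hi}" for x using pd[OF that] Pe by simp
  have F0: "F x > 0" if "x \<in> {lo..hi}" for x using fd[OF that] Fe by simp
  have vsm: "v x < v y" if "lo \<le> x" "x < y" "y \<le> hi" for x y
  proof -
    have "F x < F y" by (rule deriv_strict_mono_convex[OF sc Fd Fc that])
    moreover have "P x \<le> P y" by (rule deriv_mono_convex[OF pc Pd Pc]) (use that in auto)
    moreover have "F x > 0" "P y < 1" using that by (auto intro!: F0 P1)
    ultimately have "F x / (1 - P x) \<le> F x / (1 - P y)" "F x / (1 - P y) < F y / (1 - P y)"
      by (auto intro!: divide_left_mono divide_strict_right_mono)
    then show ?thesis unfolding v_def by simp
  qed
  have vmono: "v x \<le> v y" if "lo \<le> x" "x \<le> y" "y \<le> hi" for x y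
    using vsm[of x y] that by (cases "x = y") auto
  have vcont: "continuous_on {lo..hi} v" unfolding v_def
    using P1 by (intro continuous_on_divide continuous_on_diff continuous_on_const continuous_on_subset[OF Fc] continuous_on_subset[OF Pc]) force+
  have inj: "inj_on v {lo..hi}"
    by (rule inj_onI) (metis atLeastAtMost_iff linorder_neq_iff vsm order_less_irrefl)
  have img: "v ` {lo..hi} = {v lo..v hi}"
  proof
    show "v ` {lo..hi} \<subseteq> {v lo..v hi}" using vmono by auto
    show "{v lo..v hi} \<subseteq> v ` {lo..hi}"
    proof
      fix l assume "l \<in> {v lo..v hi}"
      then obtain x where "lo \<le> x" "x \<le> hi" "v x = l" using IVT'[of v lo l hi] vcont lohi by auto
      then show "l \<in> v ` {lo..hi}" by auto
    qed
  qed
  define T where "T = the_inv_into {lo..hi} v"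
  have Tc: "continuous_on {v lo..v hi} T"
    unfolding T_def img[symmetric]
    by (rule continuous_on_inv[OF vcont compact_Icc]) (simp add: the_inv_into_f_f[OF inj])
  have Tin: "T l \<in> {lo..hi}" if "l \<in> {v lo..v hi}" for l
    unfolding T_def by (rule the_inv_into_into[OF inj]) (use img that in auto)
  have vT: "v (T l) = l" if "l \<in> {v lo..v hi}" for l
    unfolding T_def by (rule f_the_inv_into_f[OF inj]) (use img that in auto)
  have Tmono: "T a \<le> T b" if "a \<in> {v lo..v hi}" "b \<in> {v lo..v hi}" "a \<le> b" for a b
  proof (rule ccontr)
    assume "\<not> T a \<le> T b"
    then have "v (T b) < v (T a)" using Tin[OF that(1)] Tin[OF that(2)] by (intro vsm) auto
    then show False using vT that by simp
  qed
  have Tlo: "T (v lo) = lo" and Thi: "T (v hi) = hi"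
    unfolding T_def using inj lohi by (auto intro!: the_inv_into_f_f)
  have vlohi: "v lo \<le> v hi" using vmono lohi by simp
  define clip where "clip = (\<lambda>l. max (v lo) (min (v hi) l))"
  have clipin: "clip l \<in> {v lo..v hi}" for l unfolding clip_def using vlohi by auto
  have xh: "xhat f \<phi> lo hi l = T (clip l)" for l
  proof -
    consider "l \<le> v lo" | "\<not> l \<le> v lo" "l \<ge> v hi" | "\<not> l \<le> v lo" "\<not> l \<ge> v hi" by blast
    then show ?thesis
    proof cases
      case 1 then have "clip l = v lo" unfolding clip_def using vlohi by auto
      then show ?thesis using 1 Tlo unfolding xhat_def vfun_eq by simp
    next
      case 2 then have "clip l = v hi" unfolding clip_def using vlohi by auto
      then show ?thesis using 2 Thi unfolding xhat_def vfun_eq by simp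
    next
      case 3 then have "clip l = l" unfolding clip_def using vlohi by auto
      then show ?thesis using 3 unfolding xhat_def vfun_eq T_def by simp
    qed
  qed
  have xhin: "xhat f \<phi> lo hi l \<in> {lo..hi}" for l using xh Tin clipin by simp
  have xhc: "continuous_on UNIV (xhat f \<phi> lo hi)"
  proof -
    have "continuous_on UNIV (\<lambda>l. T (clip l))"
    proof (rule continuous_on_compose2[OF Tc])
      show "continuous_on UNIV clip" unfolding clip_def by (intro continuous_intros)
    qed (use clipin in auto)
    then show ?thesis using xh by simp
  qed
  have xhm: "xhat f \<phi> lo hi a \<le> xhat f \<phi> lo hi b" if "a \<le> b" for a b
    unfolding xh by (rule Tmono[OF clipin clipin]) (use that in \<open>auto simp: clip_def\<close>)
  have phic: "continuous_on UNIV \<phi>"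
    using Pd by (meson DERIV_isCont continuous_at_imp_continuous_on)
  have ppm: "x - \<phi> x \<le> y - \<phi> y" if "lo \<le> x" "x \<le> y" "y \<le> hi" for x y
  proof (rule DERIV_nonneg_imp_nondecreasing[OF that(2)])
    fix z assume "x \<le> z" "z \<le> y"
    then have "P z < 1" using that by (intro P1) auto
    then show "\<exists>d. ((\<lambda>x. x - \<phi> x) has_real_derivative d) (at z) \<and> 0 \<le> d"
      by (intro exI[of _ "1 - P z"]) (auto intro!: derivative_eq_intros Pd)
  qed
  show "continuous_on UNIV (\<lambda>l. xhat f \<phi> lo hi l - \<phi> (xhat f \<phi> lo hi l))"
    by (intro continuous_intros xhc continuous_on_compose2[OF phic xhc]) auto
  show "mono (\<lambda>l. xhat f \<phi> lo hi l - \<phi> (xhat f \<phi> lo hi l))"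
    by (rule monoI) (use ppm xhin xhm in \<open>auto\<close>)
  show "\<And>l. l \<le> vfun f \<phi> lo \<Longrightarrow> xhat f \<phi> lo hi l - \<phi> (xhat f \<phi> lo hi l) = lo - \<phi> lo"
    unfolding xhat_def by simp
  show "\<And>l. l \<ge> vfun f \<phi> hi \<Longrightarrow> xhat f \<phi> lo hi l - \<phi> (xhat f \<phi> lo hi l) = hi - \<phi> hi"
  proof -
    fix l assume "l \<ge> vfun f \<phi> hi"
    then have "clip l = v hi" unfolding clip_def vfun_eq using vlohi by auto
    then show "xhat f \<phi> lo hi l - \<phi> (xhat f \<phi> lo hi l) = hi - \<phi> hi" using xh Thi by simp
  qed
qed


lemma sym_swap:
  fixes F :: "nat \<Rightarrow> nat \<Rightarrow> real"
  assumes fin: "finite I" and EI: "E \<subseteq> I \<times> I" and sym: "\<And>i j. (i, j) \<in> E \<Longrightarrow> (j, i) \<in> E"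
  shows "(\<Sum>i\<in>I. \<Sum>j\<in>{j. (j, i) \<in> E}. F i j) = (\<Sum>i\<in>I. \<Sum>j\<in>{j. (j, i) \<in> E}. F j i)"
proof -
  have fn: "finite {j. (j, i) \<in> E}" for i
    by (rule finite_subset[OF _ fin]) (use EI in auto)
  have "(\<Sum>i\<in>I. \<Sum>j\<in>{j. (j, i) \<in> E}. F i j) = (\<Sum>x\<in>Sigma I (\<lambda>i. {j. (j, i) \<in> E}). F (fst x) (snd x))"
    by (subst sum.Sigma[OF fin]) (auto simp: fn split_def)
  also have "\<dots> = (\<Sum>x\<in>Sigma I (\<lambda>i. {j. (j, i) \<in> E}). F (snd x) (fst x))"
    by (rule sum.reindex_bij_witness[of _ "\<lambda>(a,b). (b,a)" "\<lambda>(a,b). (b,a)"]) (use EI sym in auto)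
  also have "\<dots> = (\<Sum>i\<in>I. \<Sum>j\<in>{j. (j, i) \<in> E}. F j i)"
    by (subst sum.Sigma[OF fin]) (auto simp: fn split_def)
  finally show ?thesis .
qed

lemma lap_sum_zero:
  fixes y :: "nat \<Rightarrow> real"
  assumes fin: "finite I" and EI: "E \<subseteq> I \<times> I" and sym: "\<And>i j. (i, j) \<in> E \<Longrightarrow> (j, i) \<in> E"
  shows "(\<Sum>i\<in>I. \<Sum>j\<in>{j. (j, i) \<in> E}. y j - y i) = 0"
proof -
  have "(\<Sum>i\<in>I. \<Sum>j\<in>{j. (j, i) \<in> E}. y j - y i) = (\<Sum>i\<in>I. \<Sum>j\<in>{j. (j, i) \<in> E}. y i - y j)"
    by (rule sym_swap[OF fin EI sym])
  also have "\<dots> = - (\<Sum>i\<in>I. \<Sum>j\<in>{j. (j, i) \<in> E}. y j - y i)"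
    by (simp add: sum_negf[symmetric])
  finally show ?thesis by simp
qed

lemma lap_quad:
  fixes x y :: "nat \<Rightarrow> real"
  assumes fin: "finite I" and EI: "E \<subseteq> I \<times> I" and sym: "\<And>i j. (i, j) \<in> E \<Longrightarrow> (j, i) \<in> E"
  shows "(\<Sum>i\<in>I. x i * (\<Sum>j\<in>{j. (j, i) \<in> E}. y j - y i))
     = - (1/2) * (\<Sum>i\<in>I. \<Sum>j\<in>{j. (j, i) \<in> E}. (x i - x j) * (y i - y j))"
proof -
  have sw: "(\<Sum>i\<in>I. \<Sum>j\<in>{j. (j, i) \<in> E}. x j * (y i - y j)) = (\<Sum>i\<in>I. \<Sum>j\<in>{j. (j, i) \<in> E}. x i * (y j - y i))"
    by (rule sym_swap[OF fin EI sym])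
  have "(\<Sum>i\<in>I. \<Sum>j\<in>{j. (j, i) \<in> E}. (x i - x j) * (y i - y j))
      = (\<Sum>i\<in>I. \<Sum>j\<in>{j. (j, i) \<in> E}. x i * (y i - y j)) - (\<Sum>i\<in>I. \<Sum>j\<in>{j. (j, i) \<in> E}. x j * (y i - y j))"
    by (simp add: left_diff_distrib sum_subtractf)
  also have "\<dots> = -2 * (\<Sum>i\<in>I. \<Sum>j\<in>{j. (j, i) \<in> E}. x i * (y j - y i))"
    unfolding sw by (simp add: algebra_simps sum_subtractf sum_negf[symmetric])
  finally show ?thesis by (simp add: sum_distrib_left)
qed

lemma barrier:
  fixes s s' :: "real \<Rightarrow> real" and a T :: real
  assumes der: "\<And>t. t \<ge> a \<Longrightarrow> (s has_real_derivative s' t) (at t)"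
    and neg: "\<And>t. t \<ge> a \<Longrightarrow> s t > T \<Longrightarrow> s' t \<le> 0"
    and t: "t \<ge> a"
  shows "s t \<le> max (s a) T"
proof (rule ccontr)
  assume "\<not> ?thesis"
  then have big: "s t > max (s a) T" by (meson not_le)
  define M where "M = max (s a) T"
  define Z where "Z = {u \<in> {a..t}. s u \<le> M}"
  have cont: "continuous_on {a..t} s"
    using der by (meson DERIV_isCont atLeastAtMost_iff continuous_at_imp_continuous_on)
  have Zc: "closed Z" unfolding Z_def
    by (rule continuous_on_closed_Collect_le[OF cont continuous_on_const]) simp
  have aZ: "a \<in> Z" using t by (simp add: Z_def M_def)
  have Zb: "bdd_above Z" unfolding Z_def by (rule bdd_aboveI[of _ t]) auto
  define t0 where "t0 = Sup Z"
  have t0Z: "t0 \<in> Z" unfolding t0_def using closed_contains_Sup[OF _ Zb Zc] aZ by blast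
  have t0t: "t0 < t"
  proof -
    have "t0 \<le> t" "s t0 \<le> M" using t0Z by (auto simp: Z_def)
    moreover have "t0 \<noteq> t" using \<open>s t0 \<le> M\<close> big by (auto simp: M_def)
    ultimately show ?thesis by simp
  qed
  have t0a: "t0 \<ge> a" using t0Z by (auto simp: Z_def)
  have above: "s u > M" if "t0 < u" "u \<le> t" for u
  proof (rule ccontr)
    assume "\<not> s u > M"
    then have "u \<in> Z" using that t0a by (auto simp: Z_def)
    then have "u \<le> t0" unfolding t0_def by (rule cSup_upper[OF _ Zb])
    then show False using that by simp
  qed
  have "s t \<le> s t0"
  proof (rule DERIV_nonpos_imp_decreasing_open[OF less_imp_le[OF t0t]])
    fix x assume "t0 < x" "x < t"
    then show "\<exists>y. (s has_real_derivative y) (at x) \<and> y \<le> 0"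
      using der[of x] neg[of x] above[of x] t0a by (intro exI[of _ "s' x"]) (auto simp: M_def)
  next
    show "continuous_on {t0..t} s" by (rule continuous_on_subset[OF cont]) (use t0a in auto)
  qed
  moreover have "s t0 \<le> M" using t0Z by (simp add: Z_def)
  ultimately show False using big by (simp add: M_def)
qed

lemma finite_BW:
  fixes x :: "nat \<Rightarrow> nat \<Rightarrow> real"
  assumes "finite I" and "\<And>n i. i \<in> I \<Longrightarrow> \<bar>x n i\<bar> \<le> R"
  shows "\<exists>r p. strict_mono r \<and> (\<forall>i\<in>I. (\<lambda>n. x (r n) i) \<longlonglongrightarrow> p i)"
  using assms
proof (induction I rule: finite_induct)
  case empty
  then show ?case by (auto intro: strict_mono_id)
next
  case (insert a I)
  then obtain r p where r: "strict_mono r" and p: "\<forall>i\<in>I. (\<lambda>n. x (r n) i) \<longlonglongrightarrow> p i" by auto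
  have "bounded (range (\<lambda>n. x (r n) a))"
    using insert.prems by (intro boundedI[of _ R]) auto
  then obtain l r2 where r2: "strict_mono r2" and l: "((\<lambda>n. x (r n) a) \<circ> r2) \<longlonglongrightarrow> l"
    using bounded_imp_convergent_subsequence by blast
  show ?case
  proof (intro exI conjI ballI)
    show "strict_mono (r \<circ> r2)" using r r2 by (rule strict_mono_o)
    fix i assume i: "i \<in> insert a I"
    show "(\<lambda>n. x ((r \<circ> r2) n) i) \<longlonglongrightarrow> (p(a := l)) i"
    proof (cases "i = a")
      case True then show ?thesis using l by (simp add: o_def)
    next
      case False
      then have "i \<in> I" using i by simp
      then have "((\<lambda>n. x (r n) i) \<circ> r2) \<longlonglongrightarrow> p i" using p LIMSEQ_subseq_LIMSEQ[OF _ r2] by blast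
      then show ?thesis using False by (simp add: o_def)
    qed
  qed
qed

lemma antideriv:
  fixes g :: "real \<Rightarrow> real"
  assumes "continuous_on UNIV g"
  shows "\<exists>G. \<forall>x. (G has_real_derivative g x) (at x)"
proof (intro exI allI)
  fix x :: real
  define a where "a = min 0 x - 1"
  define b where "b = max 0 x + 1"
  define c :: real where "c = 0"
  have "((\<lambda>u. LBINT y=c..u. g y) has_vector_derivative g x) (at x within {a..b})"
    by (rule interval_integral_FTC2) (use assms in \<open>auto simp: a_def b_def c_def intro: continuous_on_subset\<close>)
  moreover have "at x within {a..b} = at x" by (rule at_within_Icc_at) (auto simp: a_def b_def)
  ultimately show "((\<lambda>u. LBINT y=c..u. g y) has_real_derivative g x) (at x)"
    by (simp add: has_real_derivative_iff_has_vector_derivative)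
qed

lemma lipschitz_deriv:
  fixes G g :: "real \<Rightarrow> real"
  assumes d: "\<And>x. (G has_real_derivative g x) (at x)" and b: "\<And>x. \<bar>g x\<bar> \<le> M"
  shows "\<bar>G x - G y\<bar> \<le> M * \<bar>x - y\<bar>"
proof -
  have *: "\<bar>G v - G u\<bar> \<le> M * (v - u)" if uv: "u < v" for u v
  proof -
    obtain l z where "u < z" "z < v" "DERIV G z :> l" "G v - G u = (v - u) * l"
      using MVT[OF uv] d by (meson DERIV_isCont continuous_at_imp_continuous_on real_differentiable_def)
    then have "G v - G u = (v - u) * g z" using d DERIV_unique by metis
    then have "\<bar>G v - G u\<bar> = (v - u) * \<bar>g z\<bar>" using uv by (simp add: abs_mult)
    also have "\<dots> \<le> (v - u) * M" using b uv by (intro mult_left_mono) auto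
    finally show ?thesis by (simp add: mult.commute)
  qed
  consider "x < y" | "x = y" | "y < x" by linarith
  then show ?thesis
  proof cases
    case 1 then show ?thesis using *[OF 1] by (simp add: abs_minus_commute)
  next
    case 2 then show ?thesis by simp
  next
    case 3 then show ?thesis using *[OF 3] by simp
  qed
qed

lemma path_bound:
  fixes y :: "nat \<Rightarrow> real"
  assumes "(p, q) \<in> E ^^ n" and "\<And>a b. (a, b) \<in> E \<Longrightarrow> \<bar>y a - y b\<bar> \<le> B"
  shows "\<bar>y p - y q\<bar> \<le> real n * B"
  using assms(1)
proof (induction n arbitrary: q)
  case 0 then show ?case by simp
next
  case (Suc n)
  from Suc.prems obtain z where "(p, z) \<in> E ^^ n" "(z, q) \<in> E" by (rule relpow_Suc_E)
  then have "\<bar>y p - y z\<bar> \<le> real n * B" "\<bar>y z - y q\<bar> \<le> B" using Suc.IH assms(2) by auto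
  then show ?case by (simp add: algebra_simps)
qed


lemma scale_le:
  fixes Nr x c :: real
  assumes "1 \<le> Nr" "Nr * x \<le> c" "0 \<le> c"
  shows "x \<le> c"
proof (cases "x \<le> 0")
  case True then show ?thesis using assms by simp
next
  case False
  then have "1 * x \<le> Nr * x" using assms by (intro mult_right_mono) auto
  then show ?thesis using assms by simp
qed

lemma mono_prod_nonneg:
  fixes h :: "real \<Rightarrow> real"
  assumes "mono h"
  shows "0 \<le> (a - b) * (h a - h b)"
proof (cases "a \<le> b")
  case True then have "h a \<le> h b" using monoD[OF assms] by blast
  then show ?thesis using True by (intro mult_nonpos_nonpos) auto
next
  case False then have "h b \<le> h a" using monoD[OF assms, of b a] by simp
  then show ?thesis using False by (intro mult_nonneg_nonneg) auto
qed

lemma main_dyn: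
  fixes I :: "nat set" and i0 :: nat and d :: "nat \<Rightarrow> real" and g :: "nat \<Rightarrow> real \<Rightarrow> real"
    and E :: "(nat \<times> nat) set" and k R0 :: real and \<Lambda> :: "real \<Rightarrow> nat \<Rightarrow> real"
  assumes fin: "finite I" and i0: "i0 \<in> I"
    and gc: "\<And>i. i \<in> I \<Longrightarrow> continuous_on UNIV (g i)"
    and gm: "\<And>i. i \<in> I \<Longrightarrow> mono (g i)"
    and R0: "R0 \<ge> 0"
    and glo: "\<And>i l. i \<in> I \<Longrightarrow> l \<le> -R0 \<Longrightarrow> g i l = g i (-R0)"
    and ghi: "\<And>i l. i \<in> I \<Longrightarrow> l \<ge> R0 \<Longrightarrow> g i l = g i R0"
    and EI: "E \<subseteq> I \<times> I" and sym: "\<And>i j. (i, j) \<in> E \<Longrightarrow> (j, i) \<in> E"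
    and conn: "\<And>i. i \<in> I \<Longrightarrow> (i, i0) \<in> E\<^sup>*"
    and flo: "(\<Sum>i\<in>I. g i (-R0)) \<le> (\<Sum>i\<in>I. d i)"
    and fhi: "(\<Sum>i\<in>I. d i) \<le> (\<Sum>i\<in>I. g i R0)"
    and kpos: "k > 0"
    and dyn: "\<And>i t. i \<in> I \<Longrightarrow> t \<ge> 1 \<Longrightarrow> ((\<lambda>s. \<Lambda> s i) has_real_derivative
        (d i - g i (\<Lambda> t i) + k * (\<Sum>j\<in>{j. (j, i) \<in> E}. \<Lambda> t j - \<Lambda> t i))) (at t)"
  shows "(\<forall>i\<in>I. \<exists>L. ((\<lambda>t. \<Lambda> t i) \<longlongrightarrow> L) at_top)
     \<and> ((\<lambda>t. \<Sum>i\<in>I. g i (\<Lambda> t i)) \<longlongrightarrow> (\<Sum>i\<in>I. d i)) at_top"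
proof -
  define nb where "nb = (\<lambda>i. {j. (j, i) \<in> E})"
  define Fv where "Fv = (\<lambda>(y::nat\<Rightarrow>real) i. d i - g i (y i) + k * (\<Sum>j\<in>nb i. y j - y i))"
  define S where "S = (\<Sum>i\<in>I. d i)"
  have nbI: "nb i \<subseteq> I" for i using EI by (auto simp: nb_def)
  have nbfin: "finite (nb i)" for i using finite_subset[OF nbI fin] .
  have dynF: "((\<lambda>s. \<Lambda> s i) has_real_derivative Fv (\<Lambda> t) i) (at t)" if "i \<in> I" "t \<ge> 1" for i t
    using dyn[OF that] by (simp add: Fv_def nb_def)
  have lapz: "(\<Sum>i\<in>I. \<Sum>j\<in>nb i. y j - y i) = 0" for y :: "nat \<Rightarrow> real"
    unfolding nb_def by (rule lap_sum_zero[OF fin EI sym])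
  have lapq: "(\<Sum>i\<in>I. x i * (\<Sum>j\<in>nb i. y j - y i))
     = - (1/2) * (\<Sum>i\<in>I. \<Sum>j\<in>nb i. (x i - x j) * (y i - y j))" for x y :: "nat \<Rightarrow> real"
    unfolding nb_def by (rule lap_quad[OF fin EI sym])
  have sumF: "(\<Sum>i\<in>I. Fv y i) = S - (\<Sum>i\<in>I. g i (y i))" for y
  proof -
    have "(\<Sum>i\<in>I. Fv y i) = (\<Sum>i\<in>I. d i - g i (y i)) + k * (\<Sum>i\<in>I. \<Sum>j\<in>nb i. y j - y i)"
      unfolding Fv_def by (simp only: sum.distrib sum_distrib_left)
    then show ?thesis using lapz by (simp add: sum_subtractf S_def)
  qed
  define M where "M = (\<Sum>i\<in>I. \<bar>g i (-R0)\<bar> + \<bar>g i R0\<bar>)"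
  have M0: "M \<ge> 0" unfolding M_def by (intro sum_nonneg) auto
  have gbound: "\<bar>g i l\<bar> \<le> M" if i: "i \<in> I" for i l
  proof -
    have "g i (-R0) \<le> g i l"
    proof (cases "l \<le> -R0")
      case True then show ?thesis using glo[OF i True] by simp
    next
      case False then show ?thesis by (intro monoD[OF gm[OF i]]) simp
    qed
    moreover have "g i l \<le> g i R0"
    proof (cases "l \<ge> R0")
      case True then show ?thesis using ghi[OF i True] by simp
    next
      case False then show ?thesis by (intro monoD[OF gm[OF i]]) simp
    qed
    moreover have "\<bar>g i (-R0)\<bar> + \<bar>g i R0\<bar> \<le> M"
      unfolding M_def by (rule member_le_sum[OF i _ fin]) auto
    ultimately show ?thesis by arith
  qed
  have "\<forall>i\<in>I. \<exists>G. \<forall>x. (G has_real_derivative g i x) (at x)"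
    using antideriv gc by blast
  then obtain G where Gd: "\<And>i x. i \<in> I \<Longrightarrow> (G i has_real_derivative g i x) (at x)"
    using bchoice[of I "\<lambda>i G. \<forall>x. (G has_real_derivative g i x) (at x)"] by blast
  have Glip: "\<bar>G i x - G i y\<bar> \<le> M * \<bar>x - y\<bar>" if "i \<in> I" for i x y
    by (rule lipschitz_deriv[OF Gd[OF that] gbound[OF that]])
  have "\<exists>c. -R0 \<le> c \<and> c \<le> R0 \<and> (\<Sum>i\<in>I. g i c) = S"
  proof (rule IVT')
    show "continuous_on {-R0..R0} (\<lambda>c. \<Sum>i\<in>I. g i c)"
      by (intro continuous_on_sum) (meson continuous_on_subset gc subset_UNIV)
  qed (use flo fhi R0 in \<open>auto simp: S_def\<close>)
  then obtain cs where cs: "(\<Sum>i\<in>I. g i cs) = S" by blast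
  define H where "H = (\<lambda>c. \<Sum>i\<in>I. G i c - d i * c)"
  have Hd: "(H has_real_derivative (\<Sum>i\<in>I. g i c) - S) (at c)" for c
  proof -
    have "(H has_real_derivative (\<Sum>i\<in>I. g i c - d i)) (at c)"
      unfolding H_def by (intro DERIV_sum derivative_eq_intros) (auto intro: Gd)
    then show ?thesis by (simp add: sum_subtractf S_def)
  qed
  have Hmin: "H c \<ge> H cs" for c
  proof (cases "c \<ge> cs")
    case True
    show ?thesis
    proof (rule DERIV_nonneg_imp_nondecreasing[OF True])
      fix x assume "cs \<le> x" "x \<le> c"
      then have "(\<Sum>i\<in>I. g i cs) \<le> (\<Sum>i\<in>I. g i x)"
        by (intro sum_mono monoD[OF gm]) auto
      then show "\<exists>y. (H has_real_derivative y) (at x) \<and> 0 \<le> y"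
        using Hd[of x] cs by (intro exI[of _ "(\<Sum>i\<in>I. g i x) - S"]) auto
    qed
  next
    case False
    then have ccs: "c \<le> cs" by simp
    show ?thesis
    proof (rule DERIV_nonpos_imp_nonincreasing[OF ccs])
      fix x assume "c \<le> x" "x \<le> cs"
      then have "(\<Sum>i\<in>I. g i x) \<le> (\<Sum>i\<in>I. g i cs)"
        by (intro sum_mono monoD[OF gm]) auto
      then show "\<exists>y. (H has_real_derivative y) (at x) \<and> y \<le> 0"
        using Hd[of x] cs by (intro exI[of _ "(\<Sum>i\<in>I. g i x) - S"]) auto
    qed
  qed
  define Q where "Q = (\<lambda>y::nat\<Rightarrow>real. \<Sum>i\<in>I. \<Sum>j\<in>nb i. (y i - y j)^2)"
  define V where "V = (\<lambda>y::nat\<Rightarrow>real. (\<Sum>i\<in>I. G i (y i) - d i * y i) + k/4 * Q y)"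
  have Qnn: "Q y \<ge> 0" for y unfolding Q_def by (intro sum_nonneg) auto
  have edge: "\<bar>y a - y b\<bar> \<le> sqrt (Q y)" if ab: "(a, b) \<in> E" for y a b
  proof -
    have b: "b \<in> I" and a: "a \<in> nb b" using ab EI by (auto simp: nb_def)
    have "(y b - y a)^2 \<le> (\<Sum>j\<in>nb b. (y b - y j)^2)"
      by (rule member_le_sum[OF a _ nbfin]) auto
    also have "\<dots> \<le> Q y" unfolding Q_def
      by (rule member_le_sum[OF b _ fin]) (auto intro: sum_nonneg)
    finally have "\<bar>y a - y b\<bar>^2 \<le> Q y" by (simp add: power2_commute)
    then show ?thesis by (rule real_le_rsqrt)
  qed
  define pn where "pn = (\<lambda>i. SOME n. (i, i0) \<in> E ^^ n)"
  have pn: "(i, i0) \<in> E ^^ pn i" if "i \<in> I" for i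
    unfolding pn_def by (rule someI_ex) (use conn[OF that] rtrancl_power in blast)
  define Kp where "Kp = (\<Sum>i\<in>I. real (pn i))"
  have Kp0: "Kp \<ge> 0" unfolding Kp_def by (intro sum_nonneg) auto
  have spread: "\<bar>y i - y i0\<bar> \<le> Kp * sqrt (Q y)" if i: "i \<in> I" for y i
  proof -
    have "\<bar>y i - y i0\<bar> \<le> real (pn i) * sqrt (Q y)"
      by (rule path_bound[OF pn[OF i]]) (rule edge)
    also have "\<dots> \<le> Kp * sqrt (Q y)"
      unfolding Kp_def using Qnn[of y] by (intro mult_right_mono member_le_sum[OF i _ fin]) auto
    finally show ?thesis .
  qed
  define C where "C = (\<Sum>i\<in>I. M + \<bar>d i\<bar>)"
  have C0: "C \<ge> 0" unfolding C_def using M0 by (intro sum_nonneg) auto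
  have Vlow: "V y \<ge> H cs - C * Kp * sqrt (Q y) + k/4 * Q y" for y
  proof -
    define c where "c = y i0"
    have trm: "G i (y i) - d i * y i \<ge> (G i c - d i * c) - (M + \<bar>d i\<bar>) * (Kp * sqrt (Q y))"
      if i: "i \<in> I" for i
    proof -
      have s: "\<bar>y i - c\<bar> \<le> Kp * sqrt (Q y)" using spread[OF i] by (simp add: c_def)
      have "G i (y i) \<ge> G i c - M * \<bar>y i - c\<bar>" using Glip[OF i, of "y i" c] by linarith
      moreover have "d i * (y i - c) \<le> \<bar>d i\<bar> * \<bar>y i - c\<bar>"
        by (metis abs_ge_self abs_mult)
      moreover have "(M + \<bar>d i\<bar>) * \<bar>y i - c\<bar> \<le> (M + \<bar>d i\<bar>) * (Kp * sqrt (Q y))"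
        using s M0 by (intro mult_left_mono) auto
      ultimately show ?thesis by (simp add: algebra_simps)
    qed
    have "(\<Sum>i\<in>I. G i (y i) - d i * y i) \<ge> (\<Sum>i\<in>I. (G i c - d i * c) - (M + \<bar>d i\<bar>) * (Kp * sqrt (Q y)))"
      by (rule sum_mono) (rule trm)
    also have "(\<Sum>i\<in>I. (G i c - d i * c) - (M + \<bar>d i\<bar>) * (Kp * sqrt (Q y))) = H c - C * Kp * sqrt (Q y)"
      by (simp add: H_def C_def sum_subtractf sum_distrib_right mult.assoc)
    finally have "(\<Sum>i\<in>I. G i (y i) - d i * y i) \<ge> H c - C * Kp * sqrt (Q y)" .
    then show ?thesis using Hmin[of c] by (simp add: V_def)
  qed
  have Vder: "((\<lambda>s. V (\<Lambda> s)) has_real_derivative - (\<Sum>i\<in>I. (Fv (\<Lambda> t) i)^2)) (at t)"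
    if t: "t \<ge> 1" for t
  proof -
    let ?F = "Fv (\<Lambda> t)"
    have dL: "((\<lambda>s. \<Lambda> s i) has_real_derivative ?F i) (at t)" if "i \<in> I" for i
      by (rule dynF[OF that t])
    have dG: "((\<lambda>s. G i (\<Lambda> s i)) has_real_derivative g i (\<Lambda> t i) * ?F i) (at t)" if "i \<in> I" for i
      by (rule DERIV_chain2[OF Gd[OF that] dL[OF that]])
    have dQ: "((\<lambda>s. (\<Lambda> s i - \<Lambda> s j)^2) has_real_derivative 2 * (\<Lambda> t i - \<Lambda> t j) * (?F i - ?F j)) (at t)"
      if "i \<in> I" "j \<in> I" for i j
      using DERIV_power[OF DERIV_diff[OF dL[OF that(1)] dL[OF that(2)]], of 2] by (simp add: algebra_simps)
    have D1: "((\<lambda>s. V (\<Lambda> s)) has_real_derivative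
        (\<Sum>i\<in>I. g i (\<Lambda> t i) * ?F i - d i * ?F i)
        + k/4 * (\<Sum>i\<in>I. \<Sum>j\<in>nb i. 2 * (\<Lambda> t i - \<Lambda> t j) * (?F i - ?F j))) (at t)"
      unfolding V_def Q_def
      by (intro DERIV_add DERIV_sum DERIV_diff DERIV_cmult dG dL dQ) (use nbI in auto)
    have "(\<Sum>i\<in>I. \<Sum>j\<in>nb i. 2 * (\<Lambda> t i - \<Lambda> t j) * (?F i - ?F j))
        = 2 * (\<Sum>i\<in>I. \<Sum>j\<in>nb i. (?F i - ?F j) * (\<Lambda> t i - \<Lambda> t j))"
      unfolding sum_distrib_left by (intro sum.cong refl) (simp add: algebra_simps)
    also have "\<dots> = -4 * (\<Sum>i\<in>I. ?F i * (\<Sum>j\<in>nb i. \<Lambda> t j - \<Lambda> t i))"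
      using lapq[of ?F "\<Lambda> t"] by simp
    finally have q: "(\<Sum>i\<in>I. \<Sum>j\<in>nb i. 2 * (\<Lambda> t i - \<Lambda> t j) * (?F i - ?F j))
        = -4 * (\<Sum>i\<in>I. ?F i * (\<Sum>j\<in>nb i. \<Lambda> t j - \<Lambda> t i))" .
    have "(\<Sum>i\<in>I. g i (\<Lambda> t i) * ?F i - d i * ?F i)
        + k/4 * (\<Sum>i\<in>I. \<Sum>j\<in>nb i. 2 * (\<Lambda> t i - \<Lambda> t j) * (?F i - ?F j))
        = (\<Sum>i\<in>I. g i (\<Lambda> t i) * ?F i - d i * ?F i - k * (?F i * (\<Sum>j\<in>nb i. \<Lambda> t j - \<Lambda> t i)))"
    proof -
      have e1: "(\<Sum>i\<in>I. g i (\<Lambda> t i) * ?F i - d i * ?F i - k * (?F i * (\<Sum>j\<in>nb i. \<Lambda> t j - \<Lambda> t i)))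
          = (\<Sum>i\<in>I. g i (\<Lambda> t i) * ?F i - d i * ?F i) - k * (\<Sum>i\<in>I. ?F i * (\<Sum>j\<in>nb i. \<Lambda> t j - \<Lambda> t i))"
        by (simp only: sum_subtractf sum_distrib_left)
      show ?thesis unfolding q e1 by simp
    qed
    also have "\<dots> = (\<Sum>i\<in>I. -((?F i)^2))"
    proof (rule sum.cong[OF refl])
      fix i assume "i \<in> I"
      let ?L = "\<Sum>j\<in>nb i. \<Lambda> t j - \<Lambda> t i"
      have hF: "?F i = d i - g i (\<Lambda> t i) + k * ?L" by (simp add: Fv_def)
      have "g i (\<Lambda> t i) * ?F i - d i * ?F i - k * (?F i * ?L) = - (?F i * (d i - g i (\<Lambda> t i) + k * ?L))"
        by (simp add: algebra_simps)
      also have "\<dots> = - ((?F i)^2)" by (simp only: hF[symmetric] power2_eq_square)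
      finally show "g i (\<Lambda> t i) * ?F i - d i * ?F i - k * (?F i * ?L) = - ((?F i)^2)" .
    qed
    also have "\<dots> = - (\<Sum>i\<in>I. (?F i)^2)" by (simp add: sum_negf)
    finally show ?thesis using D1 by simp
  qed
  have Vdec: "V (\<Lambda> t) \<le> V (\<Lambda> u)" if "1 \<le> u" "u \<le> t" for u t
  proof (rule DERIV_nonpos_imp_nonincreasing[OF that(2)])
    fix x assume "u \<le> x" "x \<le> t"
    then show "\<exists>y. ((\<lambda>s. V (\<Lambda> s)) has_real_derivative y) (at x) \<and> y \<le> 0"
      using Vder[of x] that by (intro exI[of _ "- (\<Sum>i\<in>I. (Fv (\<Lambda> x) i)^2)"]) (auto intro: sum_nonneg)
  qed
  define V1 where "V1 = V (\<Lambda> 1)"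
  define X where "X = \<bar>V1 - H cs\<bar>"
  define Bq where "Bq = 1 + (C * Kp + X) / (k/4)"
  have qb: "sqrt (Q (\<Lambda> t)) \<le> Bq" if t: "t \<ge> 1" for t
  proof (rule ccontr)
    define q where "q = sqrt (Q (\<Lambda> t))"
    assume "\<not> sqrt (Q (\<Lambda> t)) \<le> Bq"
    then have qB: "q > Bq" by (simp add: q_def)
    have k4: "k/4 > 0" using kpos by simp
    have CK: "C * Kp \<ge> 0" using C0 Kp0 by simp
    have X0: "X \<ge> 0" by (simp add: X_def)
    have "(C * Kp + X) / (k/4) \<ge> 0" using CK X0 k4 by simp
    then have q1: "q > 1" using qB by (simp add: Bq_def)
    have "k/4 * q > k/4 * Bq" using qB k4 by simp
    also have "k/4 * Bq = k/4 + (C * Kp + X)" unfolding Bq_def using k4 by (simp add: field_simps)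
    finally have a1: "k/4 * q - C * Kp > k/4 + X" by simp
    have "q * (k/4 * q - C * Kp) > q * (k/4 + X)" using a1 q1 by (intro mult_strict_left_mono) auto
    moreover have "q * (k/4 + X) \<ge> 1 * (k/4 + X)" using q1 k4 X0 by (intro mult_right_mono) auto
    ultimately have big: "k/4 * q^2 - C * Kp * q > X" using k4
      by (simp add: power2_eq_square algebra_simps)
    have "H cs - C * Kp * q + k/4 * q^2 \<le> V (\<Lambda> t)"
      using Vlow[of "\<Lambda> t"] Qnn[of "\<Lambda> t"] by (simp add: q_def)
    also have "\<dots> \<le> V1" unfolding V1_def by (rule Vdec) (use t in auto)
    finally have "k/4 * q^2 - C * Kp * q \<le> V1 - H cs" by simp
    then show False using big by (simp add: X_def)
  qed
  define Bs where "Bs = Kp * Bq"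
  have Bq0: "Bq \<ge> 0" using qb[of 1] by (meson order_trans real_sqrt_ge_zero Qnn order_refl)
  have Bs0: "Bs \<ge> 0" using Kp0 Bq0 by (simp add: Bs_def)
  have spreadT: "\<bar>\<Lambda> t i - \<Lambda> t i0\<bar> \<le> Bs" if "i \<in> I" "t \<ge> 1" for i t
  proof -
    have "\<bar>\<Lambda> t i - \<Lambda> t i0\<bar> \<le> Kp * sqrt (Q (\<Lambda> t))" by (rule spread[OF that(1)])
    also have "\<dots> \<le> Kp * Bq" using Kp0 qb[OF that(2)] by (intro mult_left_mono) auto
    finally show ?thesis by (simp add: Bs_def)
  qed
  define sm where "sm = (\<lambda>t. \<Sum>i\<in>I. \<Lambda> t i)"
  define Nr where "Nr = real (card I)"
  have Nr1: "Nr \<ge> 1" using i0 fin by (auto simp: Nr_def Suc_le_eq card_gt_0_iff)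
  have smder: "(sm has_real_derivative S - (\<Sum>i\<in>I. g i (\<Lambda> t i))) (at t)" if "t \<ge> 1" for t
  proof -
    have "(sm has_real_derivative (\<Sum>i\<in>I. Fv (\<Lambda> t) i)) (at t)"
      unfolding sm_def by (intro DERIV_sum dynF that)
    then show ?thesis by (simp add: sumF)
  qed
  have smup: "sm t \<le> Nr * (\<Lambda> t i0 + Bs)" if "t \<ge> 1" for t
  proof -
    have "sm t \<le> (\<Sum>i\<in>I. \<Lambda> t i0 + Bs)" unfolding sm_def
      using spreadT that by (intro sum_mono) fastforce
    then show ?thesis by (simp add: Nr_def)
  qed
  have smlo: "sm t \<ge> Nr * (\<Lambda> t i0 - Bs)" if "t \<ge> 1" for t
  proof -
    have "sm t \<ge> (\<Sum>i\<in>I. \<Lambda> t i0 - Bs)" unfolding sm_def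
      using spreadT that by (intro sum_mono) fastforce
    then show ?thesis by (simp add: Nr_def)
  qed
  define T1 where "T1 = Nr * (R0 + 2 * Bs)"
  have smU: "sm t \<le> max (sm 1) T1" if "t \<ge> 1" for t
  proof (rule barrier[OF smder _ that])
    fix u :: real assume u: "u \<ge> 1" "sm u > T1"
    then have "Nr * (R0 + 2 * Bs) < Nr * (\<Lambda> u i0 + Bs)" using smup[OF u(1)] by (simp add: T1_def)
    then have "R0 + 2 * Bs < \<Lambda> u i0 + Bs" using Nr1 by simp
    then have "g i (\<Lambda> u i) = g i R0" if "i \<in> I" for i
      using spreadT[OF that u(1)] by (intro ghi[OF that]) linarith
    then have "(\<Sum>i\<in>I. g i (\<Lambda> u i)) = (\<Sum>i\<in>I. g i R0)" by simp
    then show "S - (\<Sum>i\<in>I. g i (\<Lambda> u i)) \<le> 0" using fhi by (simp add: S_def)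
  qed
  have smL: "- sm t \<le> max (- sm 1) T1" if "t \<ge> 1" for t
  proof (rule barrier[where s="\<lambda>t. - sm t", OF DERIV_minus[OF smder] _ that])
    fix u :: real assume u: "u \<ge> 1" "- sm u > T1"
    then have "Nr * (\<Lambda> u i0 - Bs) < Nr * (- R0 - 2 * Bs)" using smlo[OF u(1)] by (simp add: T1_def algebra_simps)
    then have "\<Lambda> u i0 - Bs < - R0 - 2 * Bs" using Nr1 by simp
    then have "g i (\<Lambda> u i) = g i (-R0)" if "i \<in> I" for i
      using spreadT[OF that u(1)] by (intro glo[OF that]) linarith
    then have "(\<Sum>i\<in>I. g i (\<Lambda> u i)) = (\<Sum>i\<in>I. g i (-R0))" by simp
    then show "- (S - (\<Sum>i\<in>I. g i (\<Lambda> u i))) \<le> 0" using flo by (simp add: S_def)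
  qed (simp)
  define SB where "SB = \<bar>sm 1\<bar> + \<bar>T1\<bar>"
  define Rb where "Rb = SB + 2 * Bs"
  have trajb: "\<bar>\<Lambda> t i\<bar> \<le> Rb" if "i \<in> I" "t \<ge> 1" for i t
  proof -
    have u: "Nr * (\<Lambda> t i0 - Bs) \<le> SB" using smlo[OF that(2)] smU[OF that(2)] by (simp add: SB_def)
    have l: "Nr * (- \<Lambda> t i0 - Bs) \<le> SB" using smup[OF that(2)] smL[OF that(2)]
      by (simp add: SB_def algebra_simps)
    have "\<Lambda> t i0 - Bs \<le> SB" by (rule scale_le[OF Nr1 u]) (simp add: SB_def)
    moreover have "- \<Lambda> t i0 - Bs \<le> SB" by (rule scale_le[OF Nr1 l]) (simp add: SB_def)
    moreover have "\<bar>\<Lambda> t i - \<Lambda> t i0\<bar> \<le> Bs" by (rule spreadT[OF that])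
    ultimately show ?thesis by (simp add: Rb_def abs_le_iff)
  qed
  have CK: "C * Kp \<ge> 0" using C0 Kp0 by simp
  have Vlb: "V (\<Lambda> t) \<ge> H cs - C * Kp * Bq" if "t \<ge> 1" for t
  proof -
    have "C * Kp * sqrt (Q (\<Lambda> t)) \<le> C * Kp * Bq" using CK qb[OF that] by (intro mult_left_mono) auto
    moreover have "k/4 * Q (\<Lambda> t) \<ge> 0" using kpos Qnn by simp
    ultimately show ?thesis using Vlow[of "\<Lambda> t"] by linarith
  qed
  have small: "\<exists>t\<ge>T. (\<Sum>i\<in>I. (Fv (\<Lambda> t) i)^2) < \<epsilon>" if eps: "\<epsilon> > 0" and T: "T \<ge> 1" for \<epsilon> T
  proof (rule ccontr)
    assume nt: "\<not> ?thesis"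
    have ge: "\<epsilon> \<le> (\<Sum>i\<in>I. (Fv (\<Lambda> t) i)^2)" if "t \<ge> T" for t
      using nt that by force
    define lb where "lb = H cs - C * Kp * Bq"
    define L where "L = (\<bar>V1 - lb\<bar> + 1) / \<epsilon>"
    have L0: "L \<ge> 0" using eps by (simp add: L_def)
    have eL: "\<epsilon> * L = \<bar>V1 - lb\<bar> + 1" using eps by (simp add: L_def)
    have "V (\<Lambda> T) + \<epsilon> * T \<ge> V (\<Lambda> (T + L)) + \<epsilon> * (T + L)"
    proof (rule DERIV_nonpos_imp_nonincreasing[of T "T + L" "\<lambda>s. V (\<Lambda> s) + \<epsilon> * s"])
      show "T \<le> T + L" using L0 by simp
    next
      fix x assume x: "T \<le> x" "x \<le> T + L"
      have "((\<lambda>s. V (\<Lambda> s) + \<epsilon> * s) has_real_derivative - (\<Sum>i\<in>I. (Fv (\<Lambda> x) i)^2) + \<epsilon> * 1) (at x)"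
        by (intro DERIV_add DERIV_cmult DERIV_ident Vder) (use x T in auto)
      then show "\<exists>y. ((\<lambda>s. V (\<Lambda> s) + \<epsilon> * s) has_real_derivative y) (at x) \<and> y \<le> 0"
        using ge[of x] x by (intro exI[of _ "- (\<Sum>i\<in>I. (Fv (\<Lambda> x) i)^2) + \<epsilon> * 1"]) auto
    qed
    then have "V (\<Lambda> (T + L)) + \<epsilon> * (T + L) \<le> V (\<Lambda> T) + \<epsilon> * T" by simp
    moreover have "V (\<Lambda> T) \<le> V1" unfolding V1_def by (rule Vdec) (use T in auto)
    moreover have "V (\<Lambda> (T + L)) \<ge> lb" unfolding lb_def by (rule Vlb) (use T L0 in auto)
    moreover have "V1 - lb \<le> \<bar>V1 - lb\<bar>" by simp
    moreover have "\<epsilon> * (T + L) = \<epsilon> * T + \<epsilon> * L" by (simp add: distrib_left)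
    ultimately show False using eL by linarith
  qed
  have "\<forall>n::nat. \<exists>t. t \<ge> real n + 1 \<and> (\<Sum>i\<in>I. (Fv (\<Lambda> t) i)^2) < (inverse (real (Suc n)))^2"
  proof
    fix n :: nat
    have "\<exists>t\<ge>real n + 1. (\<Sum>i\<in>I. (Fv (\<Lambda> t) i)^2) < (inverse (real (Suc n)))^2"
      by (rule small) auto
    then show "\<exists>t. t \<ge> real n + 1 \<and> (\<Sum>i\<in>I. (Fv (\<Lambda> t) i)^2) < (inverse (real (Suc n)))^2" by blast
  qed
  from choice[OF this] obtain tn where tn: "\<forall>n. tn n \<ge> real n + 1 \<and> (\<Sum>i\<in>I. (Fv (\<Lambda> (tn n)) i)^2) < (inverse (real (Suc n)))^2"
    by blast
  have tn1: "\<And>n. tn n \<ge> real n + 1" using tn by blast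
  have tn2: "\<And>n. (\<Sum>i\<in>I. (Fv (\<Lambda> (tn n)) i)^2) < (inverse (real (Suc n)))^2" using tn by blast
  have Fsm: "\<bar>Fv (\<Lambda> (tn n)) i\<bar> \<le> inverse (real (Suc n))" if i: "i \<in> I" for n i
  proof -
    have a: "(Fv (\<Lambda> (tn n)) i)^2 \<le> (\<Sum>i\<in>I. (Fv (\<Lambda> (tn n)) i)^2)"
      by (rule member_le_sum[OF i _ fin]) auto
    have b: "(Fv (\<Lambda> (tn n)) i)^2 < (inverse (real (Suc n)))^2" using a tn2[of n] by linarith
    have c: "\<bar>Fv (\<Lambda> (tn n)) i\<bar>^2 < (inverse (real (Suc n)))^2" using b by (simp only: power2_abs)
    have "\<bar>Fv (\<Lambda> (tn n)) i\<bar> < inverse (real (Suc n))"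
      by (rule power_less_imp_less_base[OF c]) simp
    then show ?thesis by (rule less_imp_le)
  qed
  have F0: "(\<lambda>n. Fv (\<Lambda> (tn n)) i) \<longlonglongrightarrow> 0" if i: "i \<in> I" for i
    by (rule Lim_null_comparison[OF _ LIMSEQ_inverse_real_of_nat]) (use Fsm[OF i] in \<open>auto intro: always_eventually\<close>)
  have trajn: "\<bar>\<Lambda> (tn n) i\<bar> \<le> Rb" if "i \<in> I" for n i
    using trajb[OF that, of "tn n"] tn1[of n] by simp
  obtain r p where r: "strict_mono r" and pl: "\<And>i. i \<in> I \<Longrightarrow> (\<lambda>n. \<Lambda> (tn (r n)) i) \<longlonglongrightarrow> p i"
    using finite_BW[of I "\<lambda>n i. \<Lambda> (tn n) i" Rb, OF fin trajn] by blast
  have gcont: "isCont (g i) x" if "i \<in> I" for i x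
    using gc[OF that] by (simp add: continuous_on_eq_continuous_at)
  have geq: "Fv p i = 0" if i: "i \<in> I" for i
  proof -
    have lg: "(\<lambda>n. g i (\<Lambda> (tn (r n)) i)) \<longlonglongrightarrow> g i (p i)"
      by (rule isCont_tendsto_compose[OF gcont[OF i] pl[OF i]])
    have ls: "(\<lambda>n. \<Sum>j\<in>nb i. \<Lambda> (tn (r n)) j - \<Lambda> (tn (r n)) i) \<longlonglongrightarrow> (\<Sum>j\<in>nb i. p j - p i)"
      by (intro tendsto_sum tendsto_diff) (use pl nbI i in auto)
    have "(\<lambda>n. Fv (\<Lambda> (tn (r n))) i) \<longlonglongrightarrow> Fv p i"
      unfolding Fv_def by (intro tendsto_add tendsto_diff tendsto_const lg tendsto_mult ls)
    moreover have "(\<lambda>n. Fv (\<Lambda> (tn (r n))) i) \<longlonglongrightarrow> 0"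
      using LIMSEQ_subseq_LIMSEQ[OF F0[OF i] r] by (simp add: o_def)
    ultimately show ?thesis by (rule LIMSEQ_unique)
  qed
  \<comment> \<open>distance to the equilibrium p is nonincreasing\<close>
  define W where "W = (\<lambda>t. \<Sum>i\<in>I. (\<Lambda> t i - p i)^2)"
  have Wder: "(W has_real_derivative (\<Sum>i\<in>I. 2 * (\<Lambda> t i - p i) * Fv (\<Lambda> t) i)) (at t)"
    if t: "t \<ge> 1" for t
    unfolding W_def
  proof (intro DERIV_sum)
    fix i assume i: "i \<in> I"
    show "((\<lambda>s. (\<Lambda> s i - p i)^2) has_real_derivative 2 * (\<Lambda> t i - p i) * Fv (\<Lambda> t) i) (at t)"
      using DERIV_power[OF DERIV_diff[OF dynF[OF i t] DERIV_const[of "p i"]], of 2]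
      by (simp add: algebra_simps)
  qed
  have Wneg: "(\<Sum>i\<in>I. 2 * (\<Lambda> t i - p i) * Fv (\<Lambda> t) i) \<le> 0" for t
  proof -
    define e where "e = (\<lambda>i. \<Lambda> t i - p i)"
    have hF: "Fv (\<Lambda> t) i = - (g i (\<Lambda> t i) - g i (p i)) + k * (\<Sum>j\<in>nb i. e j - e i)"
      if i: "i \<in> I" for i
    proof -
      have s: "(\<Sum>j\<in>nb i. e j - e i) = (\<Sum>j\<in>nb i. \<Lambda> t j - \<Lambda> t i) - (\<Sum>j\<in>nb i. p j - p i)"
        unfolding sum_subtractf[symmetric] by (rule sum.cong) (auto simp: e_def)
      have "Fv (\<Lambda> t) i = Fv (\<Lambda> t) i - Fv p i" using geq[OF i] by simp
      also have "\<dots> = - (g i (\<Lambda> t i) - g i (p i))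
          + k * ((\<Sum>j\<in>nb i. \<Lambda> t j - \<Lambda> t i) - (\<Sum>j\<in>nb i. p j - p i))"
        by (simp add: Fv_def algebra_simps)
      finally show ?thesis unfolding s .
    qed
    have "(\<Sum>i\<in>I. 2 * (\<Lambda> t i - p i) * Fv (\<Lambda> t) i)
        = (\<Sum>i\<in>I. -2 * (e i * (g i (\<Lambda> t i) - g i (p i))) + (2 * k) * (e i * (\<Sum>j\<in>nb i. e j - e i)))"
      by (rule sum.cong[OF refl]) (simp add: hF e_def algebra_simps)
    also have "\<dots> = -2 * (\<Sum>i\<in>I. e i * (g i (\<Lambda> t i) - g i (p i)))
        + (2 * k) * (\<Sum>i\<in>I. e i * (\<Sum>j\<in>nb i. e j - e i))"
      by (simp only: sum.distrib sum_distrib_left)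
    also have "(\<Sum>i\<in>I. e i * (\<Sum>j\<in>nb i. e j - e i)) = - (1/2) * (\<Sum>i\<in>I. \<Sum>j\<in>nb i. (e i - e j) * (e i - e j))"
      by (rule lapq)
    finally have eq: "(\<Sum>i\<in>I. 2 * (\<Lambda> t i - p i) * Fv (\<Lambda> t) i)
        = -2 * (\<Sum>i\<in>I. e i * (g i (\<Lambda> t i) - g i (p i)))
          - k * (\<Sum>i\<in>I. \<Sum>j\<in>nb i. (e i - e j) * (e i - e j))" by simp
    have a: "(\<Sum>i\<in>I. e i * (g i (\<Lambda> t i) - g i (p i))) \<ge> 0"
      unfolding e_def by (intro sum_nonneg mono_prod_nonneg gm)
    have b: "(\<Sum>i\<in>I. \<Sum>j\<in>nb i. (e i - e j) * (e i - e j)) \<ge> 0"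
      by (intro sum_nonneg) auto
    have "k * (\<Sum>i\<in>I. \<Sum>j\<in>nb i. (e i - e j) * (e i - e j)) \<ge> 0" using kpos b by simp
    then show ?thesis unfolding eq using a by linarith
  qed
  have Wmono: "W t \<le> W u" if "1 \<le> u" "u \<le> t" for u t
  proof (rule DERIV_nonpos_imp_nonincreasing[OF that(2)])
    fix x assume "u \<le> x" "x \<le> t"
    then show "\<exists>y. (W has_real_derivative y) (at x) \<and> y \<le> 0"
      using Wder[of x] Wneg[of x] that by (intro exI[of _ "\<Sum>i\<in>I. 2 * (\<Lambda> x i - p i) * Fv (\<Lambda> x) i"]) auto
  qed
  have W0: "(\<lambda>n. W (tn (r n))) \<longlonglongrightarrow> 0"
  proof -
    have "(\<lambda>n. W (tn (r n))) \<longlonglongrightarrow> (\<Sum>i\<in>I. (p i - p i)^2)"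
      unfolding W_def by (intro tendsto_sum tendsto_power tendsto_diff tendsto_const pl)
    then show ?thesis by simp
  qed
  have conv: "((\<lambda>t. \<Lambda> t i) \<longlongrightarrow> p i) at_top" if i: "i \<in> I" for i
  proof (rule tendstoI)
    fix \<epsilon> :: real assume eps: "\<epsilon> > 0"
    then have "\<epsilon>^2 > 0" by simp
    from LIMSEQ_D[OF W0 this] obtain n0 where n0: "\<And>n. n \<ge> n0 \<Longrightarrow> norm (W (tn (r n)) - 0) < \<epsilon>^2"
      by blast
    define T0 where "T0 = tn (r n0)"
    have T01: "T0 \<ge> 1" using tn1[of "r n0"] by (simp add: T0_def)
    have WT0: "W T0 < \<epsilon>^2" using n0[of n0] by (simp add: T0_def)
    show "\<forall>\<^sub>F t in at_top. dist (\<Lambda> t i) (p i) < \<epsilon>"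
      unfolding eventually_at_top_linorder
    proof (intro exI allI impI)
      fix t assume t: "t \<ge> T0"
      have "(\<Lambda> t i - p i)^2 \<le> W t" unfolding W_def by (rule member_le_sum[OF i _ fin]) auto
      also have "\<dots> \<le> W T0" by (rule Wmono) (use T01 t in auto)
      finally have "\<bar>\<Lambda> t i - p i\<bar>^2 < \<epsilon>^2" using WT0 by simp
      then have "\<bar>\<Lambda> t i - p i\<bar> < \<epsilon>" by (rule power_less_imp_less_base) (use eps in auto)
      then show "dist (\<Lambda> t i) (p i) < \<epsilon>" by (simp add: dist_real_def)
    qed
  qed
  have gl: "((\<lambda>t. \<Sum>i\<in>I. g i (\<Lambda> t i)) \<longlongrightarrow> (\<Sum>i\<in>I. g i (p i))) at_top"
    by (intro tendsto_sum isCont_tendsto_compose[OF gcont conv]) auto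
  have "(\<Sum>i\<in>I. Fv p i) = 0" using geq by simp
  then have "(\<Sum>i\<in>I. g i (p i)) = S" using sumF[of p] by simp
  then show ?thesis using conv gl by (auto simp: S_def)
qed


theorem theorem2:
  fixes N :: nat
    and d lo hi :: "nat \<Rightarrow> real"
    and f \<phi> :: "nat \<Rightarrow> real \<Rightarrow> real"
    and E :: "(nat \<times> nat) set"
    and k :: real
    and \<Lambda> :: "real \<Rightarrow> nat \<Rightarrow> real"
  assumes interval: "\<And>i. i \<in> {1..N} \<Longrightarrow> lo i \<le> hi i"
    and A1_f_C1: "\<And>i. i \<in> {1..N} \<Longrightarrow> f i C1_differentiable_on UNIV"
    and A1_phi_C1: "\<And>i. i \<in> {1..N} \<Longrightarrow> \<phi> i C1_differentiable_on UNIV"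
    and A1_f_strict_convex: "\<And>i. i \<in> {1..N} \<Longrightarrow> strictly_convex_on {lo i..hi i} (f i)"
    and A1_phi_convex: "\<And>i. i \<in> {1..N} \<Longrightarrow> convex_on {lo i..hi i} (\<phi> i)"
    and A1_phi_deriv: "\<And>i x. i \<in> {1..N} \<Longrightarrow> x \<in> {lo i..hi i} \<Longrightarrow> deriv (\<phi> i) x < 1"
    and A2: "\<And>i x. i \<in> {1..N} \<Longrightarrow> x \<in> {lo i..hi i} \<Longrightarrow> deriv (f i) x > 0"
    and A3_edges: "E \<subseteq> {1..N} \<times> {1..N}"
    and A3_undirected: "\<And>i j. (i, j) \<in> E \<Longrightarrow> (j, i) \<in> E"
    and A3_connected: "\<And>i j. i \<in> {1..N} \<Longrightarrow> j \<in> {1..N} \<Longrightarrow> (i, j) \<in> E\<^sup>*"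
    and feasible_lo: "(\<Sum>i\<in>{1..N}. lo i - \<phi> i (lo i)) \<le> (\<Sum>i\<in>{1..N}. d i)"
    and feasible_hi: "(\<Sum>i\<in>{1..N}. d i) \<le> (\<Sum>i\<in>{1..N}. hi i - \<phi> i (hi i))"
    and k_pos: "k > 0"
    and dynamics: "\<And>i t. i \<in> {1..N} \<Longrightarrow> t \<ge> 0 \<Longrightarrow>
        ((\<lambda>s. \<Lambda> s i) has_real_derivative
            (d i - xhat (f i) (\<phi> i) (lo i) (hi i) (\<Lambda> t i)
                 + \<phi> i (xhat (f i) (\<phi> i) (lo i) (hi i) (\<Lambda> t i))
                 + k * (\<Sum>j\<in>{j. (j, i) \<in> E}. \<Lambda> t j - \<Lambda> t i)))
          (at t within {0..})"
  shows "(\<forall>i\<in>{1..N}. \<exists>L. ((\<lambda>t. \<Lambda> t i) \<longlongrightarrow> L) at_top)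
       \<and> ((\<lambda>t. \<Sum>i\<in>{1..N}. xhat (f i) (\<phi> i) (lo i) (hi i) (\<Lambda> t i)
                        - \<phi> i (xhat (f i) (\<phi> i) (lo i) (hi i) (\<Lambda> t i)))
            \<longlongrightarrow> (\<Sum>i\<in>{1..N}. d i)) at_top"
proof (cases "N = 0")
  case True then show ?thesis by simp
next
  case False
  then have i0: "1 \<in> {1..N}" by simp
  define gg where "gg = (\<lambda>i l. xhat (f i) (\<phi> i) (lo i) (hi i) l - \<phi> i (xhat (f i) (\<phi> i) (lo i) (hi i) l))"
  define vv where "vv = (\<lambda>i. \<bar>vfun (f i) (\<phi> i) (lo i)\<bar> + \<bar>vfun (f i) (\<phi> i) (hi i)\<bar>)"
  define R0 where "R0 = (\<Sum>i\<in>{1..N}. vv i)"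
  have R0: "R0 \<ge> 0" unfolding R0_def vv_def by (intro sum_nonneg) auto
  have vvR: "vv i \<le> R0" if "i \<in> {1..N}" for i
    unfolding R0_def by (rule member_le_sum[OF that]) (auto simp: vv_def)
  note GP = gprops[OF interval A1_f_C1 A1_phi_C1 A1_f_strict_convex A1_phi_convex A1_phi_deriv A2]
  have gc: "continuous_on UNIV (gg i)" if i: "i \<in> {1..N}" for i
    using GP(1)[OF i i i i i _ _ i] unfolding gg_def by (metis A1_phi_deriv A2 i)
  have gm: "mono (gg i)" if i: "i \<in> {1..N}" for i
    using GP(2)[OF i i i i i _ _ i] unfolding gg_def by (metis A1_phi_deriv A2 i)
  have glo0: "gg i l = lo i - \<phi> i (lo i)" if i: "i \<in> {1..N}" and "l \<le> vfun (f i) (\<phi> i) (lo i)" for i l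
    using GP(3)[OF i i i i i _ _ i, of l] that unfolding gg_def by (metis A1_phi_deriv A2 i)
  have ghi0: "gg i l = hi i - \<phi> i (hi i)" if i: "i \<in> {1..N}" and "l \<ge> vfun (f i) (\<phi> i) (hi i)" for i l
    using GP(4)[OF i i i i i _ _ i, of l] that unfolding gg_def by (metis A1_phi_deriv A2 i)
  have glo1: "gg i l = lo i - \<phi> i (lo i)" if i: "i \<in> {1..N}" and "l \<le> -R0" for i l
    using glo0[OF i] vvR[OF i] that by (simp add: vv_def)
  have ghi1: "gg i l = hi i - \<phi> i (hi i)" if i: "i \<in> {1..N}" and "l \<ge> R0" for i l
    using ghi0[OF i] vvR[OF i] that by (simp add: vv_def)
  have glo: "gg i l = gg i (-R0)" if i: "i \<in> {1..N}" and "l \<le> -R0" for i l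
    using glo1[OF i that(2)] glo1[OF i order_refl] by simp
  have ghi: "gg i l = gg i R0" if i: "i \<in> {1..N}" and "l \<ge> R0" for i l
    using ghi1[OF i that(2)] ghi1[OF i order_refl] by simp
  have flo: "(\<Sum>i\<in>{1..N}. gg i (-R0)) \<le> (\<Sum>i\<in>{1..N}. d i)"
  proof -
    have "(\<Sum>i\<in>{1..N}. gg i (-R0)) = (\<Sum>i\<in>{1..N}. lo i - \<phi> i (lo i))"
      by (rule sum.cong[OF refl]) (rule glo1, auto)
    then show ?thesis using feasible_lo by simp
  qed
  have fhi: "(\<Sum>i\<in>{1..N}. d i) \<le> (\<Sum>i\<in>{1..N}. gg i R0)"
  proof -
    have "(\<Sum>i\<in>{1..N}. gg i R0) = (\<Sum>i\<in>{1..N}. hi i - \<phi> i (hi i))"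
      by (rule sum.cong[OF refl]) (rule ghi1, auto)
    then show ?thesis using feasible_hi by simp
  qed
  have conn: "(i, 1) \<in> E\<^sup>*" if "i \<in> {1..N}" for i by (rule A3_connected[OF that i0])
  have dyn: "((\<lambda>s. \<Lambda> s i) has_real_derivative
        (d i - gg i (\<Lambda> t i) + k * (\<Sum>j\<in>{j. (j, i) \<in> E}. \<Lambda> t j - \<Lambda> t i))) (at t)"
    if i: "i \<in> {1..N}" and t: "t \<ge> 1" for i t
  proof -
    have W: "at t within {0..} = at t" by (rule at_within_interior) (use t in simp)
    have t0: "0 \<le> t" using t by simp
    from dynamics[OF i t0] have D: "((\<lambda>s. \<Lambda> s i) has_real_derivative
            (d i - xhat (f i) (\<phi> i) (lo i) (hi i) (\<Lambda> t i)
                 + \<phi> i (xhat (f i) (\<phi> i) (lo i) (hi i) (\<Lambda> t i))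
                 + k * (\<Sum>j\<in>{j. (j, i) \<in> E}. \<Lambda> t j - \<Lambda> t i))) (at t)" unfolding W .
    have "d i - xhat (f i) (\<phi> i) (lo i) (hi i) (\<Lambda> t i)
                 + \<phi> i (xhat (f i) (\<phi> i) (lo i) (hi i) (\<Lambda> t i))
                 + k * (\<Sum>j\<in>{j. (j, i) \<in> E}. \<Lambda> t j - \<Lambda> t i)
        = d i - gg i (\<Lambda> t i) + k * (\<Sum>j\<in>{j. (j, i) \<in> E}. \<Lambda> t j - \<Lambda> t i)"
      unfolding gg_def by simp
    with D show ?thesis by simp
  qed
  have M: "(\<forall>i\<in>{1..N}. \<exists>L. ((\<lambda>t. \<Lambda> t i) \<longlongrightarrow> L) at_top)
     \<and> ((\<lambda>t. \<Sum>i\<in>{1..N}. gg i (\<Lambda> t i)) \<longlongrightarrow> (\<Sum>i\<in>{1..N}. d i)) at_top"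
    by (rule main_dyn[OF finite_atLeastAtMost i0 gc gm R0 glo ghi A3_edges A3_undirected conn flo fhi k_pos dyn])
  then show ?thesis unfolding gg_def .
qed

end
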